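(* Let $k$ be a field of characteristic two and let $\tau$ be a triangular involution of $k[x,y,z,w]$. Then there exists a $k$-algebra automorphism $\varphi$ of $k[x,y,z,w]$ such that $(\varphi^{-1}\circ\tau\circ\varphi)(x)=x$, $(\varphi^{-1}\circ\tau\circ\varphi)(y)=y+\phi_2'$, $(\varphi^{-1}\circ\tau\circ\varphi)(z)=z+\phi_3'$, $(\varphi^{-1}\circ\tau\circ\varphi)(w)=w+\phi_4'$, where $\phi_2'\in k[x]$, $\phi_3'\in k[x,y]$, $\phi_4'\in k[x,y,z]$, and $\phi_2',\phi_3'$ satisfy one of the following: (1) $\phi_2'=\phi_3'=0$; (2) $\phi_2'=0$ and $\phi_3'\neq 0$; (3) $\phi_2'\neq0$ and $\phi_3'\neq0$.
   Context: A $k$-algebra automorphism $\sigma$ of $k[x,y,z,w]$ is triangular if $\sigma(x)=\lambda_1x+\phi_1$, $\sigma(y)=\lambda_2y+\phi_2$, $\sigma(z)=\lambda_3z+\phi_3$, $\sigma(w)=\lambda_4w+\phi_4$ with $\lambda_i\in k\setminus\{0\}$, $\phi_1\in k$, $\phi_2\in k[x]$, $\phi_3\in k[x,y]$, $\phi_4\in k[x,y,z]$. An involution is an automorphism $\sigma$ with $\sigma^2=\mathrm{id}$. *)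

theory Defs
  imports "HOL-Computational_Algebra.Polynomial"
begin

text \<open>The polynomial ring k[x,y,z,w] is represented as the iterated polynomial
ring ((k[x])[y])[z])[w], i.e. the type 'a poly poly poly poly.\<close>

type_synonym 'a mpoly4 = "'a poly poly poly poly"

definition constk :: "'a::field \<Rightarrow> 'a mpoly4" where
  "constk c = [:[:[:[:c:]:]:]:]"

definition emb_x :: "'a::field poly \<Rightarrow> 'a mpoly4" where
  "emb_x p = [:[:[:p:]:]:]"
definition emb_xy :: "'a::field poly poly \<Rightarrow> 'a mpoly4" where
  "emb_xy p = [:[:p:]:]"
definition emb_xyz :: "'a::field poly poly poly \<Rightarrow> 'a mpoly4" where
  "emb_xyz p = [:p:]"

definition varX :: "'a::field mpoly4" where "varX = emb_x [:0, 1:]"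
definition varY :: "'a::field mpoly4" where "varY = emb_xy [:0, 1:]"
definition varZ :: "'a::field mpoly4" where "varZ = emb_xyz [:0, 1:]"
definition varW :: "'a::field mpoly4" where "varW = [:0, 1:]"

definition k_alg_hom :: "('a::field mpoly4 \<Rightarrow> 'a mpoly4) \<Rightarrow> bool" where
  "k_alg_hom f \<longleftrightarrow>
     (\<forall>p q. f (p + q) = f p + f q) \<and>
     (\<forall>p q. f (p * q) = f p * f q) \<and>
     f 1 = 1 \<and>
     (\<forall>c. f (constk c) = constk c)"

definition k_alg_aut :: "('a::field mpoly4 \<Rightarrow> 'a mpoly4) \<Rightarrow> bool" where
  "k_alg_aut f \<longleftrightarrow> k_alg_hom f \<and> bij f"

definition triangular :: "('a::field mpoly4 \<Rightarrow> 'a mpoly4) \<Rightarrow> bool" where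
  "triangular s \<longleftrightarrow> k_alg_aut s \<and>
     (\<exists>l1 l2 l3 l4 (c1::'a) p2 p3 p4.
        l1 \<noteq> 0 \<and> l2 \<noteq> 0 \<and> l3 \<noteq> 0 \<and> l4 \<noteq> 0 \<and>
        s varX = constk l1 * varX + constk c1 \<and>
        s varY = constk l2 * varY + emb_x p2 \<and>
        s varZ = constk l3 * varZ + emb_xy p3 \<and>
        s varW = constk l4 * varW + emb_xyz p4)"

definition involution :: "('a::field mpoly4 \<Rightarrow> 'a mpoly4) \<Rightarrow> bool" where
  "involution s \<longleftrightarrow> k_alg_aut s \<and> s \<circ> s = id"

end

theory Submission
  imports Defs
begin


definition hom :: "('b::comm_ring_1 \<Rightarrow> 'r::comm_ring_1) \<Rightarrow> bool" where
  "hom f \<longleftrightarrow> (\<forall>p q. f (p + q) = f p + f q) \<and> (\<forall>p q. f (p * q) = f p * f q)"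

lemma hom_0: "hom f \<Longrightarrow> f 0 = 0"
  unfolding hom_def by (metis add_cancel_right_right add_0)

lemma pCons_split: "pCons (a::'b::comm_ring_1) p = [:a:] + [:0,1:] * p"
  by (simp add: mult_pCons_left smult_1_left)

lemma gen_eq:
  fixes f g :: "'b::comm_ring_1 poly \<Rightarrow> 'r::comm_ring_1"
  assumes "hom f" "hom g" "\<And>c. f [:c:] = g [:c:]" "f [:0,1:] = g [:0,1:]"
  shows "f p = g p"
proof (induction p)
  case (pCons a p)
  then show ?case using assms unfolding hom_def by (metis pCons_split)
qed (simp add: hom_0[OF assms(1)] hom_0[OF assms(2)])

lemma gen_closed:
  fixes f :: "'b::comm_ring_1 poly \<Rightarrow> 'r::comm_ring_1"
  assumes "hom f" "\<And>c. f [:c:] \<in> S" "f [:0,1:] \<in> S"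
    "\<And>x y. x \<in> S \<Longrightarrow> y \<in> S \<Longrightarrow> x + y \<in> S"
    "\<And>x y. x \<in> S \<Longrightarrow> y \<in> S \<Longrightarrow> x * y \<in> S"
  shows "f p \<in> S"
proof (induction p)
  case 0 then show ?case using assms(2)[of 0] by simp
next
  case (pCons a p)
  then show ?case using assms unfolding hom_def by (metis pCons_split)
qed

definition ev :: "('b::comm_ring_1 \<Rightarrow> 'r::comm_ring_1) \<Rightarrow> 'r \<Rightarrow> 'b poly \<Rightarrow> 'r" where
  "ev h d p = poly (map_poly h p) d"

lemma ev_pCons: "hom h \<Longrightarrow> ev h d (pCons a p) = h a + d * ev h d p"
  unfolding ev_def using hom_0[of h] by (simp add: map_poly_pCons)

lemma ev_add: "hom h \<Longrightarrow> ev h d (p + q) = ev h d p + ev h d q"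
proof -
  assume h: "hom h"
  have "map_poly h (p + q) = map_poly h p + map_poly h q"
    using h hom_0[OF h] by (intro poly_eqI) (simp add: coeff_map_poly hom_def)
  then show ?thesis by (simp add: ev_def)
qed

lemma ev_smult: "hom h \<Longrightarrow> ev h d (smult a q) = h a * ev h d q"
proof -
  assume h: "hom h"
  have "map_poly h (smult a q) = smult (h a) (map_poly h q)"
    using h hom_0[OF h] by (intro poly_eqI) (simp add: coeff_map_poly hom_def)
  then show ?thesis by (simp add: ev_def)
qed

lemma ev_const: "hom h \<Longrightarrow> ev h d [:c:] = h c"
  using ev_pCons[of h d c 0] hom_0[of h] by (simp add: ev_def)

lemma ev_X: "hom h \<Longrightarrow> h 1 = 1 \<Longrightarrow> ev h d [:0,1:] = d"
  using hom_0[of h] by (simp add: ev_def map_poly_pCons)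

lemma ev_mult: "hom h \<Longrightarrow> ev h d (p * q) = ev h d p * ev h d q"
proof (induction p)
  case 0 then show ?case using hom_0[of h] by (simp add: ev_def)
next
  case (pCons a p)
  have "ev h d (pCons a p * q) = ev h d (smult a q + pCons 0 (p * q))"
    by (simp add: mult_pCons_left smult_1_left)
  also have "\<dots> = h a * ev h d q + d * (ev h d p * ev h d q)"
    using pCons hom_0[of h] by (simp add: ev_add ev_smult ev_pCons)
  also have "\<dots> = ev h d (pCons a p) * ev h d q"
    using pCons by (simp add: ev_pCons algebra_simps)
  finally show ?case .
qed

lemma hom_ev: "hom h \<Longrightarrow> hom (ev h d)"
  by (simp add: hom_def ev_add ev_mult)


lemma hom_kalg: "k_alg_hom f \<Longrightarrow> hom f"
  by (simp add: k_alg_hom_def hom_def)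

lemma hom_comp: "hom f \<Longrightarrow> hom g \<Longrightarrow> hom (\<lambda>x. f (g x))"
  by (simp add: hom_def)

lemma hom_pconst: "hom (\<lambda>c::'b::comm_ring_1. [:c:])"
  by (simp add: hom_def)

lemma hom_c1: "hom f \<Longrightarrow> hom (\<lambda>p. f [:p:])"
  by (rule hom_comp[OF _ hom_pconst])
lemma hom_c2: "hom f \<Longrightarrow> hom (\<lambda>p. f [:[:p:]:])"
  by (rule hom_comp[OF _ hom_comp[OF hom_pconst hom_pconst]])
lemma hom_c3: "hom f \<Longrightarrow> hom (\<lambda>p. f [:[:[:p:]:]:])"
  by (rule hom_comp[OF _ hom_comp[OF hom_pconst hom_comp[OF hom_pconst hom_pconst]]])

lemma kalg_const: "k_alg_hom f \<Longrightarrow> f [:[:[:[:c:]:]:]:] = [:[:[:[:c:]:]:]:]"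
  unfolding k_alg_hom_def constk_def by blast

lemma agree_x:
  assumes "k_alg_hom f" "k_alg_hom g" "f varX = g varX"
  shows "f (emb_x p) = g (emb_x p)"
proof -
  have hf: "hom f" and hg: "hom g" using assms hom_kalg by auto
  show ?thesis unfolding emb_x_def
    apply (rule gen_eq[where f="\<lambda>p. f [:[:[:p:]:]:]" and g="\<lambda>p. g [:[:[:p:]:]:]"])
    apply (rule hom_c3[OF hf])
    apply (rule hom_c3[OF hg])
    apply (simp only: kalg_const[OF assms(1)] kalg_const[OF assms(2)])
    using assms(3) by (simp only: varX_def emb_x_def)
qed

lemma agree_xy:
  assumes "k_alg_hom f" "k_alg_hom g" "f varX = g varX" "f varY = g varY"
  shows "f (emb_xy p) = g (emb_xy p)"
proof -
  have hf: "hom f" and hg: "hom g" using assms hom_kalg by auto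
  show ?thesis unfolding emb_xy_def
    apply (rule gen_eq[where f="\<lambda>p. f [:[:p:]:]" and g="\<lambda>p. g [:[:p:]:]"])
    apply (rule hom_c2[OF hf])
    apply (rule hom_c2[OF hg])
    using agree_x[OF assms(1-3)] apply (simp only: emb_x_def)
    using assms(4) by (simp only: varY_def emb_xy_def)
qed

lemma agree_xyz:
  assumes "k_alg_hom f" "k_alg_hom g" "f varX = g varX" "f varY = g varY" "f varZ = g varZ"
  shows "f (emb_xyz p) = g (emb_xyz p)"
proof -
  have hf: "hom f" and hg: "hom g" using assms hom_kalg by auto
  show ?thesis unfolding emb_xyz_def
    apply (rule gen_eq[where f="\<lambda>p. f [:p:]" and g="\<lambda>p. g [:p:]"])
    apply (rule hom_c1[OF hf])
    apply (rule hom_c1[OF hg])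
    using agree_xy[OF assms(1-4)] apply (simp only: emb_xy_def)
    using assms(5) by (simp only: varZ_def emb_xyz_def)
qed

lemma agree_all:
  assumes "k_alg_hom f" "k_alg_hom g" "f varX = g varX" "f varY = g varY" "f varZ = g varZ"
    "f varW = g varW"
  shows "f p = g p"
proof -
  have hf: "hom f" and hg: "hom g" using assms hom_kalg by auto
  show ?thesis
    apply (rule gen_eq[where f="f" and g="g"])
    apply (rule hf) apply (rule hg)
    using agree_xyz[OF assms(1-5)] apply (simp only: emb_xyz_def)
    using assms(6) by (simp only: varW_def)
qed

lemma kalg_id: "k_alg_hom id" by (simp add: k_alg_hom_def)


lemma hom_constk: "hom (constk :: 'a::field \<Rightarrow> _)"
  unfolding hom_def constk_def by simp

definition s1 :: "'a::field mpoly4 \<Rightarrow> 'a poly \<Rightarrow> 'a mpoly4" where "s1 a = ev constk a"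
definition s2 :: "'a::field mpoly4 \<Rightarrow> 'a mpoly4 \<Rightarrow> 'a poly poly \<Rightarrow> 'a mpoly4" where "s2 a b = ev (s1 a) b"
definition s3 :: "'a::field mpoly4 \<Rightarrow> 'a mpoly4 \<Rightarrow> 'a mpoly4 \<Rightarrow> 'a poly poly poly \<Rightarrow> 'a mpoly4" where "s3 a b c = ev (s2 a b) c"
definition s4 :: "'a::field mpoly4 \<Rightarrow> 'a mpoly4 \<Rightarrow> 'a mpoly4 \<Rightarrow> 'a mpoly4 \<Rightarrow> 'a mpoly4 \<Rightarrow> 'a mpoly4" where "s4 a b c d = ev (s3 a b c) d"

lemma ev_one: "hom h \<Longrightarrow> ev h d 1 = h 1"
  using ev_const[of h d 1] by (simp add: one_pCons)

lemma hom_s1: "hom (s1 a)" unfolding s1_def by (rule hom_ev[OF hom_constk])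
lemma hom_s2: "hom (s2 a b)" unfolding s2_def by (rule hom_ev[OF hom_s1])
lemma hom_s3: "hom (s3 a b c)" unfolding s3_def by (rule hom_ev[OF hom_s2])
lemma hom_s4: "hom (s4 a b c d)" unfolding s4_def by (rule hom_ev[OF hom_s3])

lemma s1_c: "s1 a [:e:] = constk e" unfolding s1_def by (rule ev_const[OF hom_constk])
lemma s2_c: "s2 a b [:e:] = s1 a e" unfolding s2_def by (rule ev_const[OF hom_s1])
lemma s3_c: "s3 a b c [:e:] = s2 a b e" unfolding s3_def by (rule ev_const[OF hom_s2])
lemma s4_c: "s4 a b c d [:e:] = s3 a b c e" unfolding s4_def by (rule ev_const[OF hom_s3])

lemma s1_one: "s1 a 1 = 1" using s1_c[of a 1] by (simp add: constk_def one_pCons)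
lemma s2_one: "s2 a b 1 = 1" using s2_c[of a b 1] s1_one by (metis one_pCons)
lemma s3_one: "s3 a b c 1 = 1" using s3_c[of a b c 1] s2_one by (metis one_pCons)
lemma s4_one: "s4 a b c d 1 = 1" using s4_c[of a b c d 1] s3_one by (metis one_pCons)

lemma s1_X: "s1 a [:0,1:] = a" unfolding s1_def by (rule ev_X[OF hom_constk]) (simp add: constk_def one_pCons)
lemma s2_X: "s2 a b [:0,1:] = b" unfolding s2_def by (rule ev_X[OF hom_s1 s1_one])
lemma s3_X: "s3 a b c [:0,1:] = c" unfolding s3_def by (rule ev_X[OF hom_s2 s2_one])
lemma s4_X1: "s4 a b c d [:0,1:] = d" unfolding s4_def by (rule ev_X[OF hom_s3 s3_one])

lemma s4_W: "s4 a b c d varW = d"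
  unfolding varW_def by (rule s4_X1)
lemma s4_Z: "s4 a b c d varZ = c"
  unfolding varZ_def emb_xyz_def by (simp only: s4_c s3_X)
lemma s4_Y: "s4 a b c d varY = b"
  unfolding varY_def emb_xy_def by (simp only: s4_c s3_c s2_X)
lemma s4_X: "s4 a b c d varX = a"
  unfolding varX_def emb_x_def by (simp only: s4_c s3_c s2_c s1_X)
lemma s4_const: "s4 a b c d (constk e) = constk e"
  unfolding constk_def by (simp only: s4_c s3_c s2_c s1_c constk_def)

lemma kalg_s4: "k_alg_hom (s4 a b c d)"
  using hom_s4[of a b c d] s4_one s4_const unfolding k_alg_hom_def hom_def by blast



lemma ext_X: "constk a * varX + constk q = (varX :: 'a::field mpoly4) \<Longrightarrow> a = 1"
  by (simp add: constk_def varX_def emb_x_def)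
lemma ext_Y: "constk a * varY + emb_x q = (varY :: 'a::field mpoly4) \<Longrightarrow> a = 1"
  by (simp add: one_pCons constk_def varY_def emb_x_def emb_xy_def)
lemma ext_Z: "constk a * varZ + emb_xy q = (varZ :: 'a::field mpoly4) \<Longrightarrow> a = 1"
  by (simp add: one_pCons constk_def varZ_def emb_xyz_def emb_xy_def)
lemma ext_W: "constk a * varW + emb_xyz q = (varW :: 'a::field mpoly4) \<Longrightarrow> a = 1"
  by (simp add: one_pCons constk_def varW_def emb_xyz_def)


definition closed :: "'a::field mpoly4 set \<Rightarrow> bool" where
  "closed S \<longleftrightarrow> (\<forall>x\<in>S. \<forall>y\<in>S. x + y \<in> S \<and> x * y \<in> S) \<and> (\<forall>c. constk c \<in> S)"

lemma closed_x:
  assumes "k_alg_hom f" "closed S" "f varX \<in> S"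
  shows "f (emb_x p) \<in> S"
  unfolding emb_x_def
  apply (rule gen_closed[where f="\<lambda>p. f [:[:[:p:]:]:]"])
  apply (rule hom_c3[OF hom_kalg[OF assms(1)]])
  using kalg_const[OF assms(1)] assms(2) apply (simp add: closed_def constk_def)
  using assms(3) apply (simp only: varX_def emb_x_def)
  using assms(2) unfolding closed_def by blast+

lemma closed_xy:
  assumes "k_alg_hom f" "closed S" "f varX \<in> S" "f varY \<in> S"
  shows "f (emb_xy p) \<in> S"
  unfolding emb_xy_def
  apply (rule gen_closed[where f="\<lambda>p. f [:[:p:]:]"])
  apply (rule hom_c2[OF hom_kalg[OF assms(1)]])
  using closed_x[OF assms(1-3)] apply (simp only: emb_x_def)
  using assms(4) apply (simp only: varY_def emb_xy_def)
  using assms(2) unfolding closed_def by blast+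

lemma closed_xyz:
  assumes "k_alg_hom f" "closed S" "f varX \<in> S" "f varY \<in> S" "f varZ \<in> S"
  shows "f (emb_xyz p) \<in> S"
  unfolding emb_xyz_def
  apply (rule gen_closed[where f="\<lambda>p. f [:p:]"])
  apply (rule hom_c1[OF hom_kalg[OF assms(1)]])
  using closed_xy[OF assms(1-4)] apply (simp only: emb_xy_def)
  using assms(5) apply (simp only: varZ_def emb_xyz_def)
  using assms(2) unfolding closed_def by blast+

lemma closed_rx: "closed (range emb_x)"
  unfolding closed_def emb_x_def constk_def
  by (auto intro!: image_eqI[where x="_ + _"] image_eqI[where x="_ * _"] image_eqI[where x="[:_:]"])
lemma closed_rxy: "closed (range emb_xy)"
  unfolding closed_def emb_xy_def constk_def
  by (auto intro!: image_eqI[where x="_ + _"] image_eqI[where x="_ * _"] image_eqI[where x="[:_:]"])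
lemma closed_rxyz: "closed (range emb_xyz)"
  unfolding closed_def emb_xyz_def constk_def
  by (auto intro!: image_eqI[where x="_ + _"] image_eqI[where x="_ * _"] image_eqI[where x="[:_:]"])

lemma char2_add: assumes "(1::'a::field) + 1 = 0" shows "(x::'a mpoly4) + x = 0"
proof -
  have c1: "constk 1 = (1::'a mpoly4)" by (simp add: constk_def one_pCons)
  have "x + x = (constk 1 + constk 1) * x" by (simp only: c1 distrib_right mult_1_left)
  also have "constk 1 + constk 1 = (constk (1+1) :: 'a mpoly4)" by (simp add: constk_def)
  finally show ?thesis using assms by (simp add: constk_def)
qed

lemma kalg_comp: "k_alg_hom f \<Longrightarrow> k_alg_hom g \<Longrightarrow> k_alg_hom (f \<circ> g)"
  by (simp add: k_alg_hom_def)

lemma aut_inv: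
  assumes "k_alg_hom f" "k_alg_hom g"
    "g (f varX) = varX" "g (f varY) = varY" "g (f varZ) = varZ" "g (f varW) = varW"
    "f (g varX) = varX" "f (g varY) = varY" "f (g varZ) = varZ" "f (g varW) = varW"
  shows "k_alg_aut f"
proof -
  have 1: "(g \<circ> f) p = id p" for p
    by (rule agree_all[OF kalg_comp[OF assms(2,1)] kalg_id]) (simp_all add: assms)
  have 2: "(f \<circ> g) p = id p" for p
    by (rule agree_all[OF kalg_comp[OF assms(1,2)] kalg_id]) (simp_all add: assms)
  have "bij f" using 1 2 by (intro o_bij[of g]) auto
  then show ?thesis using assms(1) by (simp add: k_alg_aut_def)
qed



lemma constk_add: "constk (a + b) = constk a + (constk b :: 'a::field mpoly4)"
  by (simp add: constk_def)
lemma constk_mult: "constk (a * b) = constk a * (constk b :: 'a::field mpoly4)"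
  by (simp add: constk_def)
lemma constk_one: "constk 1 = (1 :: 'a::field mpoly4)"
  by (simp add: constk_def one_pCons)
lemma constk_zero: "constk 0 = (0 :: 'a::field mpoly4)"
  by (simp add: constk_def)

lemma sq1: assumes "(1::'a::field) + 1 = 0" "l * l = (1::'a)" shows "l = 1"
proof -
  have ll: "l + l = 0" using assms(1) by (metis distrib_left mult_1_right mult_zero_right)
  have "(l + 1) * (l + 1) = l * l + (l + l) + 1" by (simp add: algebra_simps)
  also have "\<dots> = 0" using assms ll by simp
  finally have "l + 1 = 0" by simp
  then have "l = - 1" by (simp add: eq_neg_iff_add_eq_0)
  moreover have "(-1::'a) = 1" using assms(1) by (simp add: eq_neg_iff_add_eq_0)
  ultimately show ?thesis by simp
qed

lemma varX_rx: "varX \<in> range emb_x" by (simp add: varX_def)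
lemma varY_rxy: "varY \<in> range emb_xy" by (simp add: varY_def)
lemma varZ_rxyz: "varZ \<in> range emb_xyz" by (simp add: varZ_def)
lemma rx_rxy: "emb_x p \<in> range emb_xy"
  by (rule image_eqI[where x="[:p:]"]) (simp_all add: emb_x_def emb_xy_def)
lemma rxy_rxyz: "emb_xy p \<in> range emb_xyz"
  by (rule image_eqI[where x="[:p:]"]) (simp_all add: emb_xyz_def emb_xy_def)
lemma const_r: "constk c \<in> range emb_x" "constk c \<in> range emb_xy" "constk c \<in> range emb_xyz"
  using closed_rx closed_rxy closed_rxyz unfolding closed_def by auto

lemma cl_add: "closed S \<Longrightarrow> x \<in> S \<Longrightarrow> y \<in> S \<Longrightarrow> x + y \<in> S"
  and cl_mult: "closed S \<Longrightarrow> x \<in> S \<Longrightarrow> y \<in> S \<Longrightarrow> x * y \<in> S"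
  and cl_const: "closed S \<Longrightarrow> constk c \<in> S"
  unfolding closed_def by auto


lemma normalize:
  fixes \<tau> :: "'a::field mpoly4 \<Rightarrow> 'a mpoly4"
  assumes char: "(1::'a)+1=0" and kh: "k_alg_hom \<tau>" and iv: "\<And>u. \<tau> (\<tau> u) = u"
    and hX: "\<tau> varX = constk l1 * varX + constk c1"
    and hY: "\<tau> varY = constk l2 * varY + emb_x p2"
    and hZ: "\<tau> varZ = constk l3 * varZ + emb_xy p3"
    and hW: "\<tau> varW = constk l4 * varW + emb_xyz p4"
  shows "l1 = 1 \<and> l2 = 1 \<and> l3 = 1 \<and> l4 = 1"
proof -
  have tadd: "\<And>p q. \<tau> (p + q) = \<tau> p + \<tau> q" and tmul: "\<And>p q. \<tau> (p * q) = \<tau> p * \<tau> q"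
    and tc: "\<And>c. \<tau> (constk c) = constk c" using kh unfolding k_alg_hom_def by auto
  have "varX = \<tau> (\<tau> varX)" using iv by simp
  also have "\<dots> = constk l1 * (constk l1 * varX + constk c1) + constk c1"
    by (simp add: hX tadd tmul tc)
  also have "\<dots> = constk (l1*l1) * varX + constk (l1*c1 + c1)"
    by (simp add: constk_add constk_mult algebra_simps)
  finally have "l1 * l1 = 1" using ext_X by metis
  then have L1: "l1 = 1" using sq1[OF char] by blast
  have rX: "\<tau> varX \<in> range emb_x" unfolding hX
    by (intro cl_add[OF closed_rx] cl_mult[OF closed_rx] const_r varX_rx)
  have rxx: "\<tau> (emb_x p) \<in> range emb_x" for p by (rule closed_x[OF kh closed_rx rX])
  have "varY = \<tau> (\<tau> varY)" using iv by simp
  also have "\<dots> = constk l2 * (constk l2 * varY + emb_x p2) + \<tau> (emb_x p2)"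
    by (simp add: hY tadd tmul tc)
  also have "\<dots> = constk (l2*l2) * varY + (constk l2 * emb_x p2 + \<tau> (emb_x p2))"
    by (simp add: constk_add constk_mult algebra_simps)
  finally have eY: "varY = constk (l2*l2) * varY + (constk l2 * emb_x p2 + \<tau> (emb_x p2))" .
  have "constk l2 * emb_x p2 + \<tau> (emb_x p2) \<in> range emb_x"
    by (intro cl_add[OF closed_rx] cl_mult[OF closed_rx] const_r rxx rangeI)
  then obtain q where "constk l2 * emb_x p2 + \<tau> (emb_x p2) = emb_x q" by auto
  with eY have "l2 * l2 = 1" using ext_Y by metis
  then have L2: "l2 = 1" using sq1[OF char] by blast
  have rXY1: "\<tau> varX \<in> range emb_xy" using rX rx_rxy by (metis imageE)
  have rXY2: "\<tau> varY \<in> range emb_xy" unfolding hY by (intro cl_add[OF closed_rxy] cl_mult[OF closed_rxy] const_r varY_rxy rx_rxy)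
  have rxy: "\<tau> (emb_xy p) \<in> range emb_xy" for p by (rule closed_xy[OF kh closed_rxy rXY1 rXY2])
  have "varZ = \<tau> (\<tau> varZ)" using iv by simp
  also have "\<dots> = constk l3 * (constk l3 * varZ + emb_xy p3) + \<tau> (emb_xy p3)"
    by (simp add: hZ tadd tmul tc)
  also have "\<dots> = constk (l3*l3) * varZ + (constk l3 * emb_xy p3 + \<tau> (emb_xy p3))"
    by (simp add: constk_add constk_mult algebra_simps)
  finally have eZ: "varZ = constk (l3*l3) * varZ + (constk l3 * emb_xy p3 + \<tau> (emb_xy p3))" .
  have "constk l3 * emb_xy p3 + \<tau> (emb_xy p3) \<in> range emb_xy"
    by (intro cl_add[OF closed_rxy] cl_mult[OF closed_rxy] const_r rxy rangeI)
  then obtain q3 where "constk l3 * emb_xy p3 + \<tau> (emb_xy p3) = emb_xy q3" by auto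
  with eZ have "l3 * l3 = 1" using ext_Z by metis
  then have L3: "l3 = 1" using sq1[OF char] by blast
  have rXYZ1: "\<tau> varX \<in> range emb_xyz" using rXY1 rxy_rxyz by (metis imageE)
  have rXYZ2: "\<tau> varY \<in> range emb_xyz" using rXY2 rxy_rxyz by (metis imageE)
  have rXYZ3: "\<tau> varZ \<in> range emb_xyz" unfolding hZ by (intro cl_add[OF closed_rxyz] cl_mult[OF closed_rxyz] const_r varZ_rxyz rxy_rxyz)
  have rxyz: "\<tau> (emb_xyz p) \<in> range emb_xyz" for p by (rule closed_xyz[OF kh closed_rxyz rXYZ1 rXYZ2 rXYZ3])
  have "varW = \<tau> (\<tau> varW)" using iv by simp
  also have "\<dots> = constk l4 * (constk l4 * varW + emb_xyz p4) + \<tau> (emb_xyz p4)"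
    by (simp add: hW tadd tmul tc)
  also have "\<dots> = constk (l4*l4) * varW + (constk l4 * emb_xyz p4 + \<tau> (emb_xyz p4))"
    by (simp add: constk_add constk_mult algebra_simps)
  finally have eW: "varW = constk (l4*l4) * varW + (constk l4 * emb_xyz p4 + \<tau> (emb_xyz p4))" .
  have "constk l4 * emb_xyz p4 + \<tau> (emb_xyz p4) \<in> range emb_xyz"
    by (intro cl_add[OF closed_rxyz] cl_mult[OF closed_rxyz] const_r rxyz rangeI)
  then obtain q4 where "constk l4 * emb_xyz p4 + \<tau> (emb_xyz p4) = emb_xyz q4" by auto
  with eW have "l4 * l4 = 1" using ext_W by metis
  then have L4: "l4 = 1" using sq1[OF char] by blast
  show ?thesis using L1 L2 L3 L4 by simp
qed



lemma hom_diff: "hom f \<Longrightarrow> f (p - q) = f p - (f q :: 'r::comm_ring_1)"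
  unfolding hom_def by (metis add_diff_cancel diff_add_cancel)

lemma s4_add: "s4 a b c d (p + q) = s4 a b c d p + s4 a b c d q"
  using hom_s4 unfolding hom_def by blast
lemma s4_mult: "s4 a b c d (p * q) = s4 a b c d p * s4 a b c d q"
  using hom_s4 unfolding hom_def by blast

lemma s4_diff: "s4 a b c d (p - q) = s4 a b c d p - s4 a b c d q"
  by (rule hom_diff[OF hom_s4])

lemma aut_comp: "k_alg_aut f \<Longrightarrow> k_alg_aut g \<Longrightarrow> k_alg_aut (f \<circ> g)"
  unfolding k_alg_aut_def using kalg_comp bij_comp by blast

lemma fixx: "s4 varX b c d (emb_x p) = emb_x p"
  using agree_x[OF kalg_s4 kalg_id, of varX b c d p] by (simp add: s4_X)
lemma fixxy: "s4 varX varY c d (emb_xy p) = emb_xy p"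
  using agree_xy[OF kalg_s4 kalg_id, of varX varY c d p] by (simp add: s4_X s4_Y)
lemma fixxyz: "s4 varX varY varZ d (emb_xyz p) = emb_xyz p"
  using agree_xyz[OF kalg_s4 kalg_id, of varX varY varZ d p] by (simp add: s4_X s4_Y s4_Z)

lemma emb_x_neg: "emb_x (-q) = - emb_x q" by (simp add: emb_x_def)
lemma emb_xy_neg: "emb_xy (-q) = - emb_xy q" by (simp add: emb_xy_def)
lemma emb_xyz_neg: "emb_xyz (-q) = - emb_xyz q" by (simp add: emb_xyz_def)

lemma elemY: "k_alg_aut (s4 varX (varY + emb_x q) varZ varW)"
  by (rule aut_inv[OF kalg_s4 kalg_s4[of varX "varY + emb_x (-q)" varZ varW]])
     (simp_all add: s4_X s4_Y s4_Z s4_W s4_add s4_diff fixx emb_x_neg)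
lemma elemZ: "k_alg_aut (s4 varX varY (varZ + emb_xy q) varW)"
  by (rule aut_inv[OF kalg_s4 kalg_s4[of varX varY "varZ + emb_xy (-q)" varW]])
     (simp_all add: s4_X s4_Y s4_Z s4_W s4_add s4_diff fixxy emb_xy_neg)
lemma elemW: "k_alg_aut (s4 varX varY varZ (varW + emb_xyz q))"
  by (rule aut_inv[OF kalg_s4 kalg_s4[of varX varY varZ "varW + emb_xyz (-q)"]])
     (simp_all add: s4_X s4_Y s4_Z s4_W s4_add s4_diff fixxyz emb_xyz_neg)
lemma permA: "k_alg_aut (s4 varY varZ varW varX)"
  by (rule aut_inv[OF kalg_s4 kalg_s4[of varW varX varY varZ]])
     (simp_all add: s4_X s4_Y s4_Z s4_W)
lemma swapYZ: "k_alg_aut (s4 varX varZ varY varW)"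
  by (rule aut_inv[OF kalg_s4 kalg_s4[of varX varZ varY varW]])
     (simp_all add: s4_X s4_Y s4_Z s4_W)
lemma swapYZ_inv: "s4 varX varZ varY varW (s4 varX varZ varY varW p) = p"
  using agree_all[OF kalg_comp[OF kalg_s4 kalg_s4] kalg_id,
      of varX varZ varY varW varX varZ varY varW p]
  by (simp add: s4_X s4_Y s4_Z s4_W)



lemma alg: "P + P = 0 \<Longrightarrow> C * K = 1 \<Longrightarrow> V + P + P * (X + C) * K = V + P * X * (K::'r::comm_ring_1)"
proof -
  assume pp: "P + P = 0" and ck: "C * K = 1"
  have "P * (X + C) * K = P * X * K + P * (C * K)" by (simp add: algebra_simps)
  then have "V + P + P * (X + C) * K = V + P * X * K + (P + P)" using ck by (simp add: algebra_simps)
  then show ?thesis using pp by simp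
qed

lemma caseA:
  fixes \<tau> :: "'a::field mpoly4 \<Rightarrow> 'a mpoly4"
  assumes char: "(1::'a)+1=0" and kh: "k_alg_hom \<tau>"
    and hX: "\<tau> varX = varX + constk c"
    and hY: "\<tau> varY = varY + emb_x p2"
    and hZ: "\<tau> varZ = varZ + emb_xy p3"
    and hW: "\<tau> varW = varW + emb_xyz p4"
    and fY: "\<tau> (emb_x p2) = emb_x p2"
    and fZ: "\<tau> (emb_xy p3) = emb_xy p3"
    and fW: "\<tau> (emb_xyz p4) = emb_xyz p4"
    and c0: "c \<noteq> 0"
  shows "\<exists>\<phi>. k_alg_aut \<phi> \<and>
           (\<exists>p2 p3 p4.
              (inv \<phi> \<circ> \<tau> \<circ> \<phi>) varX = varX \<and>
              (inv \<phi> \<circ> \<tau> \<circ> \<phi>) varY = varY + emb_x p2 \<and>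
              (inv \<phi> \<circ> \<tau> \<circ> \<phi>) varZ = varZ + emb_xy p3 \<and>
              (inv \<phi> \<circ> \<tau> \<circ> \<phi>) varW = varW + emb_xyz p4 \<and>
              ((p2 = 0 \<and> p3 = 0) \<or> (p2 = 0 \<and> p3 \<noteq> 0) \<or> (p2 \<noteq> 0 \<and> p3 \<noteq> 0)))"
proof -
  have tadd: "\<And>p q. \<tau> (p + q) = \<tau> p + \<tau> q" and tmul: "\<And>p q. \<tau> (p * q) = \<tau> p * \<tau> q"
    and tc: "\<And>c. \<tau> (constk c) = constk c" using kh unfolding k_alg_hom_def by auto
  have two: "x + x = 0" for x :: "'a mpoly4" by (rule char2_add[OF char])
  define K :: "'a mpoly4" where "K = constk (inverse c)"
  have CK: "constk c * K = 1" unfolding K_def using c0 by (simp flip: constk_mult add: constk_one)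
  have "emb_x p2 * varX * K \<in> range emb_x"
    unfolding K_def by (intro cl_mult[OF closed_rx] const_r varX_rx rangeI)
  then obtain q2 where q2: "emb_x p2 * varX * K = emb_x q2" by auto
  have vXY: "varX \<in> range emb_xy" unfolding varX_def by (rule rx_rxy)
  have "emb_xy p3 * varX * K \<in> range emb_xy"
    unfolding K_def using vXY
    by (intro cl_mult[OF closed_rxy] const_r rangeI)
  then obtain q3 where q3: "emb_xy p3 * varX * K = emb_xy q3" by auto
  have vX: "varX \<in> range emb_xyz" unfolding varX_def emb_x_def emb_xyz_def by (rule rangeI)
  have "emb_xyz p4 * varX * K \<in> range emb_xyz"
    unfolding K_def using vX by (intro cl_mult[OF closed_rxyz] const_r rangeI)
  then obtain q4 where q4: "emb_xyz p4 * varX * K = emb_xyz q4" by auto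
  define EY where "EY = s4 varX (varY + emb_x q2) varZ varW"
  define EZ where "EZ = s4 varX varY (varZ + emb_xy q3) varW"
  define EW where "EW = s4 varX varY varZ (varW + emb_xyz q4)"
  define P where "P = s4 varY varZ varW (varX :: 'a mpoly4)"
  define \<phi> where "\<phi> = EW \<circ> EZ \<circ> EY \<circ> P"
  have aut: "k_alg_aut \<phi>" unfolding \<phi>_def EY_def EZ_def EW_def P_def
    by (intro aut_comp elemY elemZ elemW permA)
  then have injf: "inj \<phi>" and kf: "k_alg_hom \<phi>" unfolding k_alg_aut_def by (auto simp: bij_def)
  have pX: "\<phi> varX = varY + emb_x q2"
    by (simp add: \<phi>_def EY_def EZ_def EW_def P_def s4_X s4_Y s4_Z s4_W s4_add fixx)
  have pY: "\<phi> varY = varZ + emb_xy q3"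
    by (simp add: \<phi>_def EY_def EZ_def EW_def P_def s4_X s4_Y s4_Z s4_W s4_add fixxy)
  have pZ: "\<phi> varZ = varW + emb_xyz q4"
    by (simp add: \<phi>_def EY_def EZ_def EW_def P_def s4_X s4_Y s4_Z s4_W s4_add fixxyz)
  have pW: "\<phi> varW = varX"
    by (simp add: \<phi>_def EY_def EZ_def EW_def P_def s4_X s4_Y s4_Z s4_W)
  have pc: "\<phi> (varW + constk c) = varX + constk c"
    using kf pW unfolding k_alg_hom_def by simp
  have tK: "\<tau> K = K" unfolding K_def by (rule tc)
  have tX: "\<tau> (\<phi> varX) = \<phi> varX" unfolding pX
    by (simp only: q2[symmetric] tadd tmul hY fY hX tK alg[OF two CK])
  have tY: "\<tau> (\<phi> varY) = \<phi> varY" unfolding pY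
    by (simp only: q3[symmetric] tadd tmul hZ fZ hX tK alg[OF two CK])
  have tZ: "\<tau> (\<phi> varZ) = \<phi> varZ" unfolding pZ
    by (simp only: q4[symmetric] tadd tmul hW fW hX tK alg[OF two CK])
  have tW: "\<tau> (\<phi> varW) = \<phi> (varW + constk c)" unfolding pW pc by (rule hX)
  have ec: "constk c = emb_xyz [:[:[:c:]:]:]" by (simp add: constk_def emb_xyz_def)
  show ?thesis
    apply (rule exI[of _ \<phi>])
    apply (rule conjI[OF aut])
    apply (rule exI[of _ 0], rule exI[of _ 0], rule exI[of _ "[:[:[:c:]:]:]"])
    using tX tY tZ tW inv_f_f[OF injf] ec by (simp add: emb_x_def emb_xy_def)
qed



lemma caseB:
  fixes \<tau> :: "'a::field mpoly4 \<Rightarrow> 'a mpoly4"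
  assumes kh: "k_alg_hom \<tau>"
    and hX: "\<tau> varX = varX"
    and hY: "\<tau> varY = varY + emb_x p2"
    and hZ: "\<tau> varZ = varZ + emb_xy p3"
    and hW: "\<tau> varW = varW + emb_xyz p4"
  shows "\<exists>\<phi>. k_alg_aut \<phi> \<and>
           (\<exists>p2 p3 p4.
              (inv \<phi> \<circ> \<tau> \<circ> \<phi>) varX = varX \<and>
              (inv \<phi> \<circ> \<tau> \<circ> \<phi>) varY = varY + emb_x p2 \<and>
              (inv \<phi> \<circ> \<tau> \<circ> \<phi>) varZ = varZ + emb_xy p3 \<and>
              (inv \<phi> \<circ> \<tau> \<circ> \<phi>) varW = varW + emb_xyz p4 \<and>
              ((p2 = 0 \<and> p3 = 0) \<or> (p2 = 0 \<and> p3 \<noteq> 0) \<or> (p2 \<noteq> 0 \<and> p3 \<noteq> 0)))"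
proof (cases "p2 = 0 \<or> p3 \<noteq> 0")
  case True
  have "k_alg_aut id" by (simp add: k_alg_aut_def kalg_id)
  then show ?thesis
    apply (intro exI[of _ id] conjI)
    apply assumption
    apply (rule exI[of _ p2], rule exI[of _ p3], rule exI[of _ p4])
    using True hX hY hZ hW by (auto simp: inv_id)
next
  case False
  then have p2: "p2 \<noteq> 0" and p3: "p3 = 0" by auto
  define \<sigma> where "\<sigma> = s4 varX varZ varY (varW :: 'a mpoly4)"
  have aut: "k_alg_aut \<sigma>" unfolding \<sigma>_def by (rule swapYZ)
  then have injf: "inj \<sigma>" unfolding k_alg_aut_def by (auto simp: bij_def)
  have ss: "\<sigma> (\<sigma> u) = u" for u unfolding \<sigma>_def by (rule swapYZ_inv)
  have iv: "inv \<sigma> u = \<sigma> u" for u by (rule inv_f_eq[OF injf ss])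
  have vY: "varY \<in> range emb_xyz" unfolding varY_def by (rule rxy_rxyz)
  have vX: "varX \<in> range emb_xyz" unfolding varX_def emb_x_def emb_xyz_def by (rule rangeI)
  have "\<sigma> (emb_xyz p4) \<in> range emb_xyz" unfolding \<sigma>_def
    by (rule closed_xyz[OF kalg_s4 closed_rxyz]) (simp_all add: s4_X s4_Y s4_Z vX vY varZ_rxyz)
  then obtain q where q: "\<sigma> (emb_xyz p4) = emb_xyz q" by auto
  have e: "emb_x p2 = emb_xy [:p2:]" by (simp add: emb_x_def emb_xy_def)
  have sv: "\<sigma> varX = varX" "\<sigma> varY = varZ" "\<sigma> varZ = varY" "\<sigma> varW = varW"
    "\<sigma> (emb_x p2) = emb_x p2" "\<And>a b. \<sigma> (a + b) = \<sigma> a + \<sigma> b"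
    unfolding \<sigma>_def by (simp_all add: s4_X s4_Y s4_Z s4_W s4_add fixx)
  have z: "emb_xy 0 = 0" "emb_x 0 = 0" by (simp_all add: emb_xy_def emb_x_def)
  have s0: "\<sigma> 0 = 0" unfolding \<sigma>_def by (rule hom_0[OF hom_s4])
  show ?thesis
    apply (intro exI[of _ \<sigma>] conjI[OF aut])
    apply (rule exI[of _ 0], rule exI[of _ "[:p2:]"], rule exI[of _ q])
    using p2 sv(5) by (simp add: iv p3 hX hY hZ hW q e z sv s0)
qed



lemma fix2: "(V::'r::ab_group_add) = V + P + T \<Longrightarrow> P + P = 0 \<Longrightarrow> T = P"
  by (metis add.assoc add_cancel_left_right add_right_imp_eq)

theorem lemma2:
  fixes \<tau> :: "'a::field mpoly4 \<Rightarrow> 'a mpoly4"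
  assumes "CHAR('a) = 2"
    and "triangular \<tau>"
    and "involution \<tau>"
  shows "\<exists>\<phi>. k_alg_aut \<phi> \<and>
           (\<exists>p2 p3 p4.
              (inv \<phi> \<circ> \<tau> \<circ> \<phi>) varX = varX \<and>
              (inv \<phi> \<circ> \<tau> \<circ> \<phi>) varY = varY + emb_x p2 \<and>
              (inv \<phi> \<circ> \<tau> \<circ> \<phi>) varZ = varZ + emb_xy p3 \<and>
              (inv \<phi> \<circ> \<tau> \<circ> \<phi>) varW = varW + emb_xyz p4 \<and>
              ((p2 = 0 \<and> p3 = 0) \<or> (p2 = 0 \<and> p3 \<noteq> 0) \<or> (p2 \<noteq> 0 \<and> p3 \<noteq> 0)))"
proof -
  have "of_nat CHAR('a) = (0::'a)" by (rule of_nat_CHAR)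
  then have char: "(1::'a) + 1 = 0" using assms(1) by simp
  have two: "x + x = 0" for x :: "'a mpoly4" by (rule char2_add[OF char])
  have kh: "k_alg_hom \<tau>" using assms(3) unfolding involution_def k_alg_aut_def by simp
  have iv: "\<tau> (\<tau> u) = u" for u using assms(3) unfolding involution_def by (metis comp_apply id_apply)
  have tadd: "\<And>p q. \<tau> (p + q) = \<tau> p + \<tau> q" using kh unfolding k_alg_hom_def by auto
  obtain l1 l2 l3 l4 c1 p2 p3 p4 where
    hX: "\<tau> varX = constk l1 * varX + constk c1" and
    hY: "\<tau> varY = constk l2 * varY + emb_x p2" and
    hZ: "\<tau> varZ = constk l3 * varZ + emb_xy p3" and
    hW: "\<tau> varW = constk l4 * varW + emb_xyz p4"
    using assms(2) unfolding triangular_def by blast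
  have L: "l1 = 1 \<and> l2 = 1 \<and> l3 = 1 \<and> l4 = 1"
    by (rule normalize[OF char kh iv hX hY hZ hW])
  have hX': "\<tau> varX = varX + constk c1" using hX L by (simp add: constk_one)
  have hY': "\<tau> varY = varY + emb_x p2" using hY L by (simp add: constk_one)
  have hZ': "\<tau> varZ = varZ + emb_xy p3" using hZ L by (simp add: constk_one)
  have hW': "\<tau> varW = varW + emb_xyz p4" using hW L by (simp add: constk_one)
  have fY: "\<tau> (emb_x p2) = emb_x p2"
    by (rule fix2[where V=varY, OF _ two], rule trans[OF iv[of varY, symmetric]]) (simp only: hY' tadd)
  have fZ: "\<tau> (emb_xy p3) = emb_xy p3"
    by (rule fix2[where V=varZ, OF _ two], rule trans[OF iv[of varZ, symmetric]]) (simp only: hZ' tadd)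
  have fW: "\<tau> (emb_xyz p4) = emb_xyz p4"
    by (rule fix2[where V=varW, OF _ two], rule trans[OF iv[of varW, symmetric]]) (simp only: hW' tadd)
  show ?thesis
  proof (cases "c1 = 0")
    case True
    then have "\<tau> varX = varX" using hX' by (simp add: constk_zero)
    then show ?thesis by (rule caseB[OF kh _ hY' hZ' hW'])
  next
    case False
    then show ?thesis by (rule caseA[OF char kh hX' hY' hZ' hW' fY fZ fW])
  qed
qed

end
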